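(* Let $\varphi$ be an increasing submodular setfunction on a sigma-algebra $(J,\mathcal{B})$, continuous from above, with $\varphi(\emptyset)=0$. Let $\mathcal{A}\subseteq\mathcal{B}$ be a set-algebra generating $\mathcal{B}$ (as a sigma-algebra). Then for every $X\in\mathcal{B}$ and every $\varepsilon>0$ there exists $Y\in\mathcal{A}$ such that $\varphi(X\triangle Y)<\varepsilon$.
   Context: $\varphi$ is increasing if $X\subseteq Y$ implies $\varphi(X)\le\varphi(Y)$, submodular if $\varphi(X)+\varphi(Y)\ge\varphi(X\cap Y)+\varphi(X\cup Y)$ for all $X,Y\in\mathcal{B}$, and continuous from above if for every decreasing sequence $X_1\supseteq X_2\supseteq\dots$ in $\mathcal{B}$ we have $\varphi(\bigcap_nX_n)=\lim_n\varphi(X_n)$. $X\triangle Y$ is the symmetric difference. *)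

theory Defs
  imports "HOL-Analysis.Analysis"
begin

definition increasing_on :: "'a set set \<Rightarrow> ('a set \<Rightarrow> real) \<Rightarrow> bool" where
  "increasing_on M \<phi> \<longleftrightarrow> (\<forall>X\<in>M. \<forall>Y\<in>M. X \<subseteq> Y \<longrightarrow> \<phi> X \<le> \<phi> Y)"

definition submodular_on :: "'a set set \<Rightarrow> ('a set \<Rightarrow> real) \<Rightarrow> bool" where
  "submodular_on M \<phi> \<longleftrightarrow> (\<forall>X\<in>M. \<forall>Y\<in>M. \<phi> X + \<phi> Y \<ge> \<phi> (X \<inter> Y) + \<phi> (X \<union> Y))"

definition continuous_from_above_on :: "'a set set \<Rightarrow> ('a set \<Rightarrow> real) \<Rightarrow> bool" where
  "continuous_from_above_on M \<phi> \<longleftrightarrow>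
     (\<forall>X :: nat \<Rightarrow> 'a set. range X \<subseteq> M \<longrightarrow> decseq X \<longrightarrow>
        (\<lambda>n. \<phi> (X n)) \<longlonglongrightarrow> \<phi> (\<Inter>n. X n))"

end

theory Submission
  imports Defs
begin

theorem lemma4p2:
  fixes J :: "'a set" and B A :: "'a set set" and \<phi> :: "'a set \<Rightarrow> real"
  assumes "sigma_algebra J B"
    and "increasing_on B \<phi>"
    and "submodular_on B \<phi>"
    and "continuous_from_above_on B \<phi>"
    and "\<phi> {} = 0"
    and "algebra J A"
    and "A \<subseteq> B"
    and "sigma_sets J A = B"
  shows "\<forall>X\<in>B. \<forall>e::real. e > 0 \<longrightarrow> (\<exists>Y\<in>A. \<phi> ((X - Y) \<union> (Y - X)) < e)"
proof -
  interpret S: sigma_algebra J B by fact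
  interpret Al: algebra J A by fact
  have mono: "\<phi> S \<le> \<phi> T" if "S \<in> B" "T \<in> B" "S \<subseteq> T" for S T
    using assms(2) that unfolding increasing_on_def by blast
  have nn: "0 \<le> \<phi> S" if "S \<in> B" for S
    using mono[of "{}" S] that assms(5) by auto
  have sub: "\<phi> (S \<union> T) \<le> \<phi> S + \<phi> T" if "S \<in> B" "T \<in> B" for S T
  proof -
    have "\<phi> S + \<phi> T \<ge> \<phi> (S \<inter> T) + \<phi> (S \<union> T)"
      using assms(3) that unfolding submodular_on_def by blast
    moreover have "0 \<le> \<phi> (S \<inter> T)" using nn that by blast
    ultimately show ?thesis by linarith
  qed
  have comb: "\<phi> Z < e1 + e2" if "S \<in> B" "T \<in> B" "Z \<in> B" "Z \<subseteq> S \<union> T"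
    "\<phi> S < e1" "\<phi> T < e2" for S T Z e1 e2
  proof -
    have "\<phi> Z \<le> \<phi> (S \<union> T)" using mono that by blast
    also have "\<dots> \<le> \<phi> S + \<phi> T" using sub that by blast
    finally show ?thesis using that by linarith
  qed
  have AB: "Y \<in> B" if "Y \<in> A" for Y using that assms(7) by blast
  have sdB: "(X - Y) \<union> (Y - X) \<in> B" if "X \<in> B" "Y \<in> B" for X Y
    using that by blast
  have main: "\<forall>e::real. e > 0 \<longrightarrow> (\<exists>Y\<in>A. \<phi> ((X - Y) \<union> (Y - X)) < e)"
    if "X \<in> sigma_sets J A" for X
    using that
  proof (induction rule: sigma_sets.induct)
    case (Basic a)
    then show ?case using assms(5) by (intro allI impI bexI[of _ a]) auto
  next
    case Empty
    then show ?case using assms(5) by (intro allI impI bexI[of _ "{}"]) auto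
  next
    case (Compl a)
    show ?case
    proof (intro allI impI)
      fix e :: real assume "e > 0"
      then obtain Y where Y: "Y \<in> A" "\<phi> ((a - Y) \<union> (Y - a)) < e" using Compl.IH by blast
      have "a \<subseteq> J" using Compl.hyps assms(8) S.sets_into_space by blast
      moreover have "Y \<subseteq> J" using Y(1) Al.sets_into_space by blast
      ultimately have "((J - a) - (J - Y)) \<union> ((J - Y) - (J - a)) = (a - Y) \<union> (Y - a)" by blast
      moreover have "J - Y \<in> A" using Y(1) by blast
      ultimately show "\<exists>Y\<in>A. \<phi> (((J - a) - Y) \<union> (Y - (J - a))) < e" using Y by metis
    qed
  next
    case (Union a)
    have aB: "a i \<in> B" for i using Union.hyps assms(8) by blast
    define U where "U n = (\<Union>i<n. a i)" for n
    have UB: "U n \<in> B" for n unfolding U_def using aB by blast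
    have Uapp: "\<forall>e::real. e > 0 \<longrightarrow> (\<exists>Y\<in>A. \<phi> ((U n - Y) \<union> (Y - U n)) < e)" for n
    proof (induction n)
      case 0
      then show ?case using assms(5) by (intro allI impI bexI[of _ "{}"]) (auto simp: U_def)
    next
      case (Suc n)
      show ?case
      proof (intro allI impI)
        fix e :: real assume "e > 0"
        then have e2: "e/2 > 0" by simp
        obtain Y1 where Y1: "Y1 \<in> A" "\<phi> ((U n - Y1) \<union> (Y1 - U n)) < e/2"
          using Suc.IH e2 by blast
        obtain Y2 where Y2: "Y2 \<in> A" "\<phi> ((a n - Y2) \<union> (Y2 - a n)) < e/2"
          using Union.IH e2 by blast
        have US: "U (Suc n) = U n \<union> a n" unfolding U_def by (auto simp: lessThan_Suc)
        have "\<phi> ((U (Suc n) - (Y1 \<union> Y2)) \<union> ((Y1 \<union> Y2) - U (Suc n))) < e/2 + e/2"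
        proof (rule comb[OF _ _ _ _ Y1(2) Y2(2)])
          show "(U n - Y1) \<union> (Y1 - U n) \<in> B" using sdB UB AB Y1 by blast
          show "(a n - Y2) \<union> (Y2 - a n) \<in> B" using sdB aB AB Y2 by blast
          show "(U (Suc n) - (Y1 \<union> Y2)) \<union> ((Y1 \<union> Y2) - U (Suc n)) \<in> B"
            using sdB UB AB Y1 Y2 by blast
          show "(U (Suc n) - (Y1 \<union> Y2)) \<union> ((Y1 \<union> Y2) - U (Suc n)) \<subseteq>
            ((U n - Y1) \<union> (Y1 - U n)) \<union> ((a n - Y2) \<union> (Y2 - a n))" using US by blast
        qed
        moreover have "Y1 \<union> Y2 \<in> A" using Y1 Y2 by blast
        ultimately show "\<exists>Y\<in>A. \<phi> ((U (Suc n) - Y) \<union> (Y - U (Suc n))) < e" by auto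
      qed
    qed
    define X where "X = (\<Union>i. a i)"
    have XB: "X \<in> B" unfolding X_def using aB by blast
    define D where "D n = X - U n" for n
    have "range D \<subseteq> B" unfolding D_def using XB UB by blast
    moreover have "decseq D" unfolding D_def U_def decseq_def by auto
    ultimately have "(\<lambda>n. \<phi> (D n)) \<longlonglongrightarrow> \<phi> (\<Inter>n. D n)"
      using assms(4) unfolding continuous_from_above_on_def by blast
    moreover have "(\<Inter>n. D n) = {}" unfolding D_def U_def X_def by auto
    ultimately have lim: "(\<lambda>n. \<phi> (D n)) \<longlonglongrightarrow> 0" using assms(5) by simp
    show ?case
    proof (intro allI impI)
      fix e :: real assume "e > 0"
      then have e2: "e/2 > 0" by simp
      from lim e2 obtain n where n: "\<bar>\<phi> (D n) - 0\<bar> < e/2"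
        by (metis LIMSEQ_iff le_refl real_norm_def)
      then have n': "\<phi> (D n) < e/2" by simp
      obtain Y where Y: "Y \<in> A" "\<phi> ((U n - Y) \<union> (Y - U n)) < e/2"
        using Uapp e2 by blast
      have "U n \<subseteq> X" unfolding U_def X_def by auto
      have "\<phi> ((X - Y) \<union> (Y - X)) < e/2 + e/2"
      proof (rule comb[OF _ _ _ _ n' Y(2)])
        show "D n \<in> B" unfolding D_def using XB UB by blast
        show "(U n - Y) \<union> (Y - U n) \<in> B" using sdB UB AB Y by blast
        show "(X - Y) \<union> (Y - X) \<in> B" using sdB XB AB Y by blast
        show "(X - Y) \<union> (Y - X) \<subseteq> D n \<union> ((U n - Y) \<union> (Y - U n))"
          unfolding D_def using \<open>U n \<subseteq> X\<close> by blast
      qed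
      then show "\<exists>Y\<in>A. \<phi> (((\<Union>i. a i) - Y) \<union> (Y - (\<Union>i. a i))) < e"
        using Y(1) unfolding X_def by auto
    qed
  qed
  show ?thesis using main assms(8) by blast
qed

end
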